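(* Let $R$ be a unital $K$-algebra, $J$ a locally f.d.ss ideal of $R$, and $T$ a finite dimensional semisimple subalgebra of $R$ with identity element $p := 1_T$ such that $R = T \oplus J$ as $K$-vector spaces. Then the following are equivalent: (a) $R$ is locally f.d.ss; (b) $pRp$ is locally f.d.ss; (c) for every idempotent $f \in pJp$ there is an idempotent $e \in pJp$ such that $f \in eJe$ and $e$ commutes with every element of $T$.
   Context: $K$ is a field. All algebras are associative $K$-algebras; ideals are two-sided ring ideals that are also $K$-subspaces. A $K$-algebra $R$ is locally f.d.ss if every finite subset of $R$ is contained in a subalgebra of $R$ that is a finite dimensional semisimple $K$-algebra. The identity $1_T$ of $T$ need not equal $1_R$. *)

theory Defs
  imports Complex_Main
begin

definition K_algebra :: "('k::field \<Rightarrow> 'r::ring_1 \<Rightarrow> 'r) \<Rightarrow> bool" where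
  "K_algebra scale \<longleftrightarrow> vector_space scale \<and>
     (\<forall>c x y. scale c (x * y) = scale c x * y) \<and>
     (\<forall>c x y. scale c (x * y) = x * scale c y)"

text \<open>Subalgebra (not necessarily containing 1): a K-subspace closed under multiplication.\<close>
definition subalgebra :: "('k::field \<Rightarrow> 'r::ring_1 \<Rightarrow> 'r) \<Rightarrow> 'r set \<Rightarrow> bool" where
  "subalgebra scale S \<longleftrightarrow> module.subspace scale S \<and> (\<forall>x\<in>S. \<forall>y\<in>S. x * y \<in> S)"

definition alg_ideal :: "('k::field \<Rightarrow> 'r::ring_1 \<Rightarrow> 'r) \<Rightarrow> 'r set \<Rightarrow> bool" where
  "alg_ideal scale I \<longleftrightarrow> module.subspace scale I \<and> (\<forall>x\<in>I. \<forall>r. r * x \<in> I \<and> x * r \<in> I)"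

definition is_identity_of :: "'r::ring_1 set \<Rightarrow> 'r \<Rightarrow> bool" where
  "is_identity_of S e \<longleftrightarrow> e \<in> S \<and> (\<forall>x\<in>S. e * x = x \<and> x * e = x)"

definition fin_dim :: "('k::field \<Rightarrow> 'r::ring_1 \<Rightarrow> 'r) \<Rightarrow> 'r set \<Rightarrow> bool" where
  "fin_dim scale S \<longleftrightarrow> (\<exists>B. finite B \<and> S \<subseteq> module.span scale B)"

definition left_ideal_in :: "('k::field \<Rightarrow> 'r::ring_1 \<Rightarrow> 'r) \<Rightarrow> 'r set \<Rightarrow> 'r set \<Rightarrow> bool" where
  "left_ideal_in scale S L \<longleftrightarrow> module.subspace scale L \<and> L \<subseteq> S \<and> (\<forall>a\<in>S. \<forall>x\<in>L. a * x \<in> L)"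

text \<open>Semisimple algebra: unital (with its own identity) and semisimple as a left module over
  itself, i.e. every left ideal has a complementary left ideal.\<close>
definition semisimple_alg :: "('k::field \<Rightarrow> 'r::ring_1 \<Rightarrow> 'r) \<Rightarrow> 'r set \<Rightarrow> bool" where
  "semisimple_alg scale S \<longleftrightarrow> (\<exists>e. is_identity_of S e) \<and>
     (\<forall>L. left_ideal_in scale S L \<longrightarrow>
        (\<exists>L'. left_ideal_in scale S L' \<and> L \<inter> L' = {0} \<and> {x + y | x y. x \<in> L \<and> y \<in> L'} = S))"

definition fdss :: "('k::field \<Rightarrow> 'r::ring_1 \<Rightarrow> 'r) \<Rightarrow> 'r set \<Rightarrow> bool" where
  "fdss scale S \<longleftrightarrow> subalgebra scale S \<and> fin_dim scale S \<and> semisimple_alg scale S"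

definition loc_fdss :: "('k::field \<Rightarrow> 'r::ring_1 \<Rightarrow> 'r) \<Rightarrow> 'r set \<Rightarrow> bool" where
  "loc_fdss scale A \<longleftrightarrow> (\<forall>F. finite F \<and> F \<subseteq> A \<longrightarrow> (\<exists>S. F \<subseteq> S \<and> S \<subseteq> A \<and> fdss scale S))"

definition corner :: "'r::ring_1 \<Rightarrow> 'r set \<Rightarrow> 'r set" where
  "corner a A = (\<lambda>x. a * x * a) ` A"

end

theory Submission
  imports Defs
begin

locale kalg = vector_space scale for scale :: "'k::field \<Rightarrow> 'r::ring_1 \<Rightarrow> 'r" +
  assumes sm1: "scale c (x * y) = scale c x * y"
    and sm2: "scale c (x * y) = x * scale c y"
begin

lemma subspace_diff': "subspace S \<Longrightarrow> x \<in> S \<Longrightarrow> y \<in> S \<Longrightarrow> x - y \<in> S"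
  by (rule subspace_diff)

lemma span_map_sub:
  assumes add: "\<And>x y. f (x + y) = f x + f y"
    and sc: "\<And>c x. f (scale c x) = scale c (f x)"
    and x: "x \<in> span B"
  shows "f x \<in> span (f ` B)"
proof -
  have f0: "f 0 = 0" using add[of 0 0] by simp
  have "subspace {x. f x \<in> span (f ` B)}"
    unfolding subspace_def using f0 add sc by (auto intro: span_add span_scale span_zero)
  from span_induct[OF x this] show ?thesis by (auto intro: span_base)
qed

lemma fin_dim_map:
  assumes add: "\<And>x y. f (x + y) = f x + f y"
    and sc: "\<And>c x. f (scale c x) = scale c (f x)"
    and fd: "fin_dim scale S"
  shows "fin_dim scale (f ` S)"
proof -
  obtain B where "finite B" "S \<subseteq> span B" using fd unfolding fin_dim_def by blast
  then show ?thesis unfolding fin_dim_def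
    by (intro exI[of _ "f ` B"]) (auto intro: span_map_sub[OF add sc])
qed

lemma fin_dim_sum:
  assumes "fin_dim scale A" "fin_dim scale C"
  shows "fin_dim scale {a + c | a c. a \<in> A \<and> c \<in> C}"
proof -
  obtain B1 where "finite B1" "A \<subseteq> span B1" using assms(1) unfolding fin_dim_def by blast
  moreover obtain B2 where "finite B2" "C \<subseteq> span B2" using assms(2) unfolding fin_dim_def by blast
  ultimately show ?thesis unfolding fin_dim_def
    by (intro exI[of _ "B1 \<union> B2"]) (auto intro!: span_add dest: subsetD intro: span_mono[THEN subsetD])
qed

lemma fin_basis:
  assumes "subspace T" "fin_dim scale T"
  obtains B where "finite B" "B \<subseteq> T" "T \<subseteq> span B"
proof -
  obtain C where C: "finite C" "T \<subseteq> span C" using assms unfolding fin_dim_def by blast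
  obtain B where B: "B \<subseteq> T" "independent B" "T \<subseteq> span B" "card B = dim T" by (rule basis_exists)
  have "finite B" using independent_span_bound[OF C(1) B(2)] B(1) C(2) by blast
  then show ?thesis using that B by blast
qed

lemma scale_mid: "scale c (a * x * b) = a * scale c x * b"
  by (metis sm1 sm2)

lemma subalgD:
  assumes "subalgebra scale S"
  shows "subspace S" "x \<in> S \<Longrightarrow> y \<in> S \<Longrightarrow> x * y \<in> S"
  using assms unfolding subalgebra_def by auto

lemma corner_subalg:
  assumes S: "subalgebra scale S" and p: "p \<in> S" and pp: "p * p = p"
  shows "subalgebra scale (corner p S)"
proof -
  have sub: "subspace S" and mul: "\<And>x y. x \<in> S \<Longrightarrow> y \<in> S \<Longrightarrow> x * y \<in> S"
    using subalgD[OF S] by auto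
  have "subspace (corner p S)"
    unfolding subspace_def corner_def
  proof (intro conjI ballI allI)
    show "0 \<in> (\<lambda>x. p * x * p) ` S" using subspace_0[OF sub] by (auto intro: image_eqI[of _ _ 0])
  next
    fix x y assume "x \<in> (\<lambda>x. p * x * p) ` S" "y \<in> (\<lambda>x. p * x * p) ` S"
    then obtain a b where "a \<in> S" "b \<in> S" "x = p*a*p" "y = p*b*p" by auto
    then show "x + y \<in> (\<lambda>x. p * x * p) ` S"
      using subspace_add[OF sub] by (auto simp: distrib_left distrib_right intro!: image_eqI[of _ _ "a+b"])
  next
    fix c x assume "x \<in> (\<lambda>x. p * x * p) ` S"
    then obtain a where "a \<in> S" "x = p*a*p" by auto
    then show "scale c x \<in> (\<lambda>x. p * x * p) ` S"
      using subspace_scale[OF sub] by (auto simp: scale_mid intro!: image_eqI[of _ _ "scale c a"])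
  qed
  moreover have "\<forall>x\<in>corner p S. \<forall>y\<in>corner p S. x * y \<in> corner p S"
  proof (intro ballI)
    fix x y assume "x \<in> corner p S" "y \<in> corner p S"
    then obtain a b where "a \<in> S" "b \<in> S" "x = p*a*p" "y = p*b*p" unfolding corner_def by auto
    moreover have "x * y = p * (a * p * b) * p" using calculation pp by (metis mult.assoc)
    ultimately show "x * y \<in> corner p S" unfolding corner_def using mul p by blast
  qed
  ultimately show ?thesis unfolding subalgebra_def by blast
qed

lemma corner_fin_dim:
  assumes "fin_dim scale S"
  shows "fin_dim scale (corner p S)"
  unfolding corner_def
  by (rule fin_dim_map[OF _ _ assms]) (auto simp: distrib_left distrib_right scale_mid)

lemma corner_ss:
  assumes S: "subalgebra scale S" and ss: "semisimple_alg scale S"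
    and p: "p \<in> S" and pp: "p * p = p"
  shows "semisimple_alg scale (corner p S)"
proof -
  have sub: "subspace S" and mul: "\<And>x y. x \<in> S \<Longrightarrow> y \<in> S \<Longrightarrow> x * y \<in> S"
    using subalgD[OF S] by auto
  have CS: "subalgebra scale (corner p S)" using corner_subalg[OF S p pp] .
  have csub: "subspace (corner p S)" using subalgD[OF CS] by auto
  have cmul: "\<And>x y. x \<in> corner p S \<Longrightarrow> y \<in> corner p S \<Longrightarrow> x * y \<in> corner p S"
    using subalgD[OF CS] by auto
  obtain u where u: "is_identity_of S u" and comp:
    "\<And>L. left_ideal_in scale S L \<Longrightarrow>
        (\<exists>L'. left_ideal_in scale S L' \<and> L \<inter> L' = {0} \<and> {x + y | x y. x \<in> L \<and> y \<in> L'} = S)"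
    using ss unfolding semisimple_alg_def by blast
  have uS: "u \<in> S" and ux: "\<And>x. x \<in> S \<Longrightarrow> u * x = x \<and> x * u = x" using u unfolding is_identity_of_def by auto
  have cornD: "\<And>y. y \<in> corner p S \<Longrightarrow> y \<in> S \<and> p * y = y \<and> y * p = y"
  proof -
    fix y assume "y \<in> corner p S"
    then obtain a where a: "a \<in> S" "y = p*a*p" unfolding corner_def by auto
    then show "y \<in> S \<and> p * y = y \<and> y * p = y" using mul p pp
      by (auto simp: mult.assoc[symmetric]) (simp add: mult.assoc)
  qed
  have pc: "p \<in> corner p S" unfolding corner_def using p pp by (auto intro!: image_eqI[of _ _ p])
  have ident: "is_identity_of (corner p S) p" unfolding is_identity_of_def using pc cornD by auto
  have "\<exists>L'. left_ideal_in scale (corner p S) L' \<and> L \<inter> L' = {0} \<and>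
            {x + y | x y. x \<in> L \<and> y \<in> L'} = corner p S"
    if L: "left_ideal_in scale (corner p S) L" for L
  proof -
    have Lsub: "subspace L" and LC: "L \<subseteq> corner p S"
      and Lmul: "\<And>a x. a \<in> corner p S \<Longrightarrow> x \<in> L \<Longrightarrow> a * x \<in> L"
      using L unfolding left_ideal_in_def by auto
    define N where "N = {x\<in>S. x * p = x \<and> (\<forall>s\<in>S. p * s * x \<in> L)}"
    have NL: "left_ideal_in scale S N"
      unfolding left_ideal_in_def
    proof (intro conjI ballI)
      show "subspace N" unfolding subspace_def
      proof (intro conjI ballI allI)
        show "0 \<in> N" unfolding N_def using subspace_0[OF sub] subspace_0[OF Lsub] by simp
      next
        fix x y assume "x \<in> N" "y \<in> N"
        then show "x + y \<in> N" unfolding N_def using subspace_add[OF sub] subspace_add[OF Lsub]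
          by (simp add: distrib_left distrib_right)
      next
        fix c x assume x: "x \<in> N"
        have xp: "x * p = x" and xL: "\<And>s. s \<in> S \<Longrightarrow> p * s * x \<in> L" using x unfolding N_def by auto
        have "scale c x * p = scale c (x * p)" by (simp add: sm1)
        then have "scale c x * p = scale c x" using xp by simp
        moreover have "p * s * scale c x \<in> L" if "s \<in> S" for s
        proof -
          have "p * s * scale c x = scale c (p * s * x)" by (simp add: sm2)
          then show ?thesis using xL[OF that] subspace_scale[OF Lsub] by simp
        qed
        ultimately show "scale c x \<in> N" using x subspace_scale[OF sub] unfolding N_def by blast
      qed
      show "N \<subseteq> S" unfolding N_def by auto
    next
      fix a x assume a: "a \<in> S" and x: "x \<in> N"
      have "\<forall>s\<in>S. p * s * (a * x) \<in> L"
      proof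
        fix s assume "s \<in> S"
        then have "s * a \<in> S" using mul a by auto
        then have "p * (s * a) * x \<in> L" using x unfolding N_def by auto
        then show "p * s * (a * x) \<in> L" by (simp add: mult.assoc)
      qed
      then show "a * x \<in> N" using x a mul unfolding N_def by (auto simp: mult.assoc)
    qed
    obtain M where M: "left_ideal_in scale S M" "N \<inter> M = {0}" "{x + y | x y. x \<in> N \<and> y \<in> M} = S"
      using comp[OF NL] by blast
    have Mmul: "\<And>a x. a \<in> S \<Longrightarrow> x \<in> M \<Longrightarrow> a * x \<in> M" and MS: "M \<subseteq> S"
      using M(1) unfolding left_ideal_in_def by auto
    have Nmul: "\<And>a x. a \<in> S \<Longrightarrow> x \<in> N \<Longrightarrow> a * x \<in> N" and NS: "N \<subseteq> S" and Nsub: "subspace N"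
      using NL unfolding left_ideal_in_def by auto
    obtain g g' where g: "g \<in> N" "g' \<in> M" "u = g + g'" using uS M(3) by blast
    have xg: "x * g = x" if x: "x \<in> N" for x
    proof -
      have xS: "x \<in> S" using x NS by auto
      have "x = x * g + x * g'" using ux[OF xS] g(3) by (simp add: distrib_left)
      moreover have "x * g \<in> N" using Nmul[OF xS g(1)] .
      ultimately have "x * g' \<in> N" using subspace_diff[OF Nsub x] by (metis add_diff_cancel_left')
      moreover have "x * g' \<in> M" using Mmul[OF xS g(2)] .
      ultimately have "x * g' = 0" using M(2) by auto
      then show ?thesis using \<open>x = x * g + x * g'\<close> by simp
    qed
    define h where "h = p * g"
    have gS: "g \<in> S" using g NS by auto
    have hL: "h \<in> L"
    proof -
      have "p * u * g \<in> L" using g(1) uS unfolding N_def by blast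
      then show ?thesis unfolding h_def using ux[OF gS] by (simp add: mult.assoc)
    qed
    have gp: "g * p = g" using g(1) unfolding N_def by auto
    have hh: "h * h = h" unfolding h_def using xg[OF g(1)]
      by (metis gp mult.assoc)
    have LN: "L \<subseteq> N"
    proof
      fix l assume l: "l \<in> L"
      have lc: "l \<in> S" "p * l = l" "l * p = l" using cornD LC l by auto
      have "p * s * l \<in> L" if s: "s \<in> S" for s
      proof -
        have "p * s * p \<in> corner p S" unfolding corner_def using s by auto
        then have "(p * s * p) * l \<in> L" using Lmul l by auto
        then show ?thesis using lc by (simp add: mult.assoc)
      qed
      then show "l \<in> N" unfolding N_def using lc by auto
    qed
    have lh: "l * h = l" if l: "l \<in> L" for l
    proof -
      have "l * p = l" using cornD LC l by auto
      then have "l * h = l * g" unfolding h_def by (metis mult.assoc)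
      then show ?thesis using xg LN l by auto
    qed
    have hC: "h \<in> corner p S" using hL LC by auto
    define L' where "L' = {y \<in> corner p S. y * h = 0}"
    have L'I: "left_ideal_in scale (corner p S) L'"
      unfolding left_ideal_in_def
    proof (intro conjI ballI)
      show "subspace L'" unfolding subspace_def L'_def
        using subspace_0[OF csub] subspace_add[OF csub] subspace_scale[OF csub]
        by (auto simp: distrib_right sm1[symmetric])
      show "L' \<subseteq> corner p S" unfolding L'_def by auto
    next
      fix a x assume "a \<in> corner p S" "x \<in> L'"
      then show "a * x \<in> L'" unfolding L'_def using cmul by (auto simp: mult.assoc)
    qed
    have int: "L \<inter> L' = {0}"
    proof
      show "L \<inter> L' \<subseteq> {0}" unfolding L'_def using lh by auto
      show "{0} \<subseteq> L \<inter> L'" using subspace_0[OF Lsub] subspace_0[OF csub] unfolding L'_def by auto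
    qed
    have sumeq: "{x + y | x y. x \<in> L \<and> y \<in> L'} = corner p S"
    proof
      show "{x + y | x y. x \<in> L \<and> y \<in> L'} \<subseteq> corner p S"
        using LC subspace_add[OF csub] unfolding L'_def by auto
    next
      show "corner p S \<subseteq> {x + y | x y. x \<in> L \<and> y \<in> L'}"
      proof
        fix y assume y: "y \<in> corner p S"
        have yh: "y * h \<in> L" using Lmul[OF y hL] .
        have "y - y * h \<in> corner p S" using subspace_diff[OF csub y] yh LC by auto
        moreover have "(y - y * h) * h = 0" using hh by (simp add: left_diff_distrib mult.assoc)
        ultimately have "y - y * h \<in> L'" unfolding L'_def by auto
        then show "y \<in> {x + y | x y. x \<in> L \<and> y \<in> L'}" using yh by force
      qed
    qed
    show ?thesis using L'I int sumeq by blast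
  qed
  then show ?thesis unfolding semisimple_alg_def using ident by blast
qed

lemma image_ss:
  assumes TA: "subalgebra scale T" and ss: "semisimple_alg scale T"
    and add: "\<And>x y. \<phi> (x + y) = \<phi> x + \<phi> y"
    and sc: "\<And>c x. \<phi> (scale c x) = scale c (\<phi> x)"
    and mh: "\<And>x y. x \<in> T \<Longrightarrow> y \<in> T \<Longrightarrow> \<phi> (x * y) = \<phi> x * \<phi> y"
  shows "semisimple_alg scale (\<phi> ` T)"
proof -
  have sub: "subspace T" and mul: "\<And>x y. x \<in> T \<Longrightarrow> y \<in> T \<Longrightarrow> x * y \<in> T"
    using subalgD[OF TA] by auto
  have f0: "\<phi> 0 = 0" using add[of 0 0] by simp
  obtain u where u: "is_identity_of T u" and comp:
    "\<And>L. left_ideal_in scale T L \<Longrightarrow>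
        (\<exists>L'. left_ideal_in scale T L' \<and> L \<inter> L' = {0} \<and> {x + y | x y. x \<in> L \<and> y \<in> L'} = T)"
    using ss unfolding semisimple_alg_def by blast
  have uT: "u \<in> T" and ux: "\<And>x. x \<in> T \<Longrightarrow> u * x = x \<and> x * u = x" using u unfolding is_identity_of_def by auto
  have ident: "is_identity_of (\<phi> ` T) (\<phi> u)" unfolding is_identity_of_def
    using uT ux by (auto simp: mh[symmetric])
  have "\<exists>L'. left_ideal_in scale (\<phi> ` T) L' \<and> L \<inter> L' = {0} \<and>
            {x + y | x y. x \<in> L \<and> y \<in> L'} = \<phi> ` T"
    if L: "left_ideal_in scale (\<phi> ` T) L" for L
  proof -
    have Lsub: "subspace L" and LC: "L \<subseteq> \<phi> ` T"
      and Lmul: "\<And>a x. a \<in> \<phi> ` T \<Longrightarrow> x \<in> L \<Longrightarrow> a * x \<in> L"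
      using L unfolding left_ideal_in_def by auto
    define P where "P = {x \<in> T. \<phi> x \<in> L}"
    have PI: "left_ideal_in scale T P" unfolding left_ideal_in_def
    proof (intro conjI ballI)
      show "subspace P" unfolding subspace_def P_def
        using subspace_0[OF sub] subspace_add[OF sub] subspace_scale[OF sub]
          subspace_0[OF Lsub] subspace_add[OF Lsub] subspace_scale[OF Lsub]
        by (simp add: f0 add sc)
      show "P \<subseteq> T" unfolding P_def by auto
    next
      fix a x assume "a \<in> T" "x \<in> P"
      then show "a * x \<in> P" unfolding P_def using mul Lmul by (simp add: mh)
    qed
    obtain M where M: "left_ideal_in scale T M" "P \<inter> M = {0}" "{x + y | x y. x \<in> P \<and> y \<in> M} = T"
      using comp[OF PI] by blast
    have Mmul: "\<And>a x. a \<in> T \<Longrightarrow> x \<in> M \<Longrightarrow> a * x \<in> M" and MT: "M \<subseteq> T" and Msub: "subspace M"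
      using M(1) unfolding left_ideal_in_def by auto
    have MI: "left_ideal_in scale (\<phi> ` T) (\<phi> ` M)" unfolding left_ideal_in_def
    proof (intro conjI ballI)
      show "subspace (\<phi> ` M)" unfolding subspace_def
      proof (intro conjI ballI allI)
        show "0 \<in> \<phi> ` M" using subspace_0[OF Msub] f0 by force
      next
        fix x y assume "x \<in> \<phi> ` M" "y \<in> \<phi> ` M"
        then show "x + y \<in> \<phi> ` M" using subspace_add[OF Msub] by (auto simp: add[symmetric])
      next
        fix c x assume "x \<in> \<phi> ` M"
        then show "scale c x \<in> \<phi> ` M" using subspace_scale[OF Msub] by (auto simp: sc[symmetric])
      qed
      show "\<phi> ` M \<subseteq> \<phi> ` T" using MT by auto
    next
      fix a x assume "a \<in> \<phi> ` T" "x \<in> \<phi> ` M"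
      then obtain b m where bm: "b \<in> T" "m \<in> M" "a = \<phi> b" "x = \<phi> m" by auto
      then have "a * x = \<phi> (b * m)" using mh MT by auto
      then show "a * x \<in> \<phi> ` M" using Mmul bm by auto
    qed
    have int: "L \<inter> \<phi> ` M = {0}"
    proof
      show "L \<inter> \<phi> ` M \<subseteq> {0}"
      proof
        fix y assume "y \<in> L \<inter> \<phi> ` M"
        then obtain m where m: "m \<in> M" "y = \<phi> m" "\<phi> m \<in> L" by auto
        then have "m \<in> P" unfolding P_def using MT by auto
        then have "m = 0" using M(2) m by auto
        then show "y \<in> {0}" using m f0 by simp
      qed
      show "{0} \<subseteq> L \<inter> \<phi> ` M" using subspace_0[OF Lsub] subspace_0[OF Msub] f0 by force
    qed
    have sumeq: "{x + y | x y. x \<in> L \<and> y \<in> \<phi> ` M} = \<phi> ` T"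
    proof
      show "{x + y | x y. x \<in> L \<and> y \<in> \<phi> ` M} \<subseteq> \<phi> ` T"
      proof
        fix z assume "z \<in> {x + y | x y. x \<in> L \<and> y \<in> \<phi> ` M}"
        then obtain x m where "x \<in> L" "m \<in> M" "z = x + \<phi> m" by auto
        moreover then obtain a where "a \<in> T" "x = \<phi> a" using LC by auto
        ultimately show "z \<in> \<phi> ` T" using MT subspace_add[OF sub] by (auto simp: add[symmetric])
      qed
    next
      show "\<phi> ` T \<subseteq> {x + y | x y. x \<in> L \<and> y \<in> \<phi> ` M}"
      proof
        fix z assume "z \<in> \<phi> ` T"
        then obtain x where x: "x \<in> T" "z = \<phi> x" by auto
        then obtain a b where "a \<in> P" "b \<in> M" "x = a + b" using M(3) by blast
        then show "z \<in> {x + y | x y. x \<in> L \<and> y \<in> \<phi> ` M}" using x unfolding P_def by (auto simp: add)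
      qed
    qed
    show ?thesis using MI int sumeq by blast
  qed
  then show ?thesis unfolding semisimple_alg_def using ident by blast
qed

lemma piece:
  assumes SA: "subalgebra scale S" and d: "d \<in> S"
    and ss: "semisimple_alg scale ((\<lambda>s. d * s) ` S)"
    and comm: "\<And>s. s \<in> S \<Longrightarrow> d * s = s * d"
    and L: "left_ideal_in scale S L"
  obtains M where "left_ideal_in scale ((\<lambda>s. d * s) ` S) M"
    "((\<lambda>x. d * x) ` L) \<inter> M = {0}"
    "{x + y | x y. x \<in> (\<lambda>x. d * x) ` L \<and> y \<in> M} = (\<lambda>s. d * s) ` S"
proof -
  have mul: "\<And>x y. x \<in> S \<Longrightarrow> y \<in> S \<Longrightarrow> x * y \<in> S"
    using subalgD[OF SA] by auto
  have Lsub: "subspace L" and LS: "L \<subseteq> S"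
    and Lmul: "\<And>a x. a \<in> S \<Longrightarrow> x \<in> L \<Longrightarrow> a * x \<in> L"
    using L unfolding left_ideal_in_def by auto
  have "left_ideal_in scale ((\<lambda>s. d * s) ` S) ((\<lambda>x. d * x) ` L)"
    unfolding left_ideal_in_def
  proof (intro conjI ballI)
    show "subspace ((\<lambda>x. d * x) ` L)" unfolding subspace_def
    proof (intro conjI ballI allI)
      show "0 \<in> (\<lambda>x. d * x) ` L" using subspace_0[OF Lsub] by (auto intro!: image_eqI[of _ _ 0])
    next
      fix x y assume "x \<in> (\<lambda>x. d * x) ` L" "y \<in> (\<lambda>x. d * x) ` L"
      then show "x + y \<in> (\<lambda>x. d * x) ` L" using subspace_add[OF Lsub]
        by (auto simp: distrib_left[symmetric])
    next
      fix c x assume "x \<in> (\<lambda>x. d * x) ` L"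
      then obtain l where l: "l \<in> L" "x = d * l" by auto
      then have "scale c x = d * scale c l" by (simp add: sm2)
      then show "scale c x \<in> (\<lambda>x. d * x) ` L" using subspace_scale[OF Lsub l(1)] by auto
    qed
    show "(\<lambda>x. d * x) ` L \<subseteq> (\<lambda>s. d * s) ` S" using LS by auto
  next
    fix a x assume a: "a \<in> (\<lambda>s. d * s) ` S" and x: "x \<in> (\<lambda>x. d * x) ` L"
    then obtain s l where sl: "s \<in> S" "l \<in> L" "a = d * s" "x = d * l" by auto
    have "a * x = d * ((s * d) * l)" using sl by (simp add: mult.assoc)
    moreover have "(s * d) * l \<in> L" using Lmul mul sl d by auto
    ultimately show "a * x \<in> (\<lambda>x. d * x) ` L" by auto
  qed
  then show ?thesis using ss that unfolding semisimple_alg_def by blast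
qed

lemma split_ss:
  assumes SA: "subalgebra scale S" and u: "is_identity_of S u"
    and c: "c \<in> S" and cc: "c * c = c" and comm: "\<And>s. s \<in> S \<Longrightarrow> c * s = s * c"
    and ss1: "semisimple_alg scale ((\<lambda>s. c * s) ` S)"
    and ss2: "semisimple_alg scale ((\<lambda>s. (u - c) * s) ` S)"
  shows "semisimple_alg scale S"
proof -
  have sub: "subspace S" and mul: "\<And>x y. x \<in> S \<Longrightarrow> y \<in> S \<Longrightarrow> x * y \<in> S"
    using subalgD[OF SA] by auto
  have uS: "u \<in> S" and ux: "\<And>x. x \<in> S \<Longrightarrow> u * x = x \<and> x * u = x" using u unfolding is_identity_of_def by auto
  have ucS: "u - c \<in> S" using subspace_diff[OF sub uS c] .
  have comm2: "\<And>s. s \<in> S \<Longrightarrow> (u - c) * s = s * (u - c)"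
    using comm ux by (simp add: left_diff_distrib right_diff_distrib)
  have cu: "c * u = c" "u * c = c" using ux[OF c] by auto
  have uu: "u * u = u" using ux[OF uS] by simp
  have ucc: "(u - c) * c = 0" using cc cu by (simp add: left_diff_distrib)
  have A1: "c * y = y" "(u - c) * y = 0" if yy: "y \<in> (\<lambda>s. c * s) ` S" for y
  proof -
    obtain s where "y = c * s" using yy by auto
    then show "c * y = y" "(u - c) * y = 0" using cc ucc by (simp_all only: mult.assoc[symmetric] mult_zero_left)
  qed
  have cuc: "c * (u - c) = 0" using cc cu by (simp add: right_diff_distrib)
  have ucuc: "(u - c) * (u - c) = u - c" using cc cu uu by (simp add: right_diff_distrib left_diff_distrib)
  have A2: "c * y = 0" "(u - c) * y = y" if yy: "y \<in> (\<lambda>s. (u - c) * s) ` S" for y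
  proof -
    obtain s where "y = (u - c) * s" using yy by auto
    then show "c * y = 0" "(u - c) * y = y" using cuc ucuc by (simp_all only: mult.assoc[symmetric] mult_zero_left)
  qed
  have "\<exists>L'. left_ideal_in scale S L' \<and> L \<inter> L' = {0} \<and> {x + y | x y. x \<in> L \<and> y \<in> L'} = S"
    if L: "left_ideal_in scale S L" for L
  proof -
    have Lsub: "subspace L" and LS: "L \<subseteq> S"
      and Lmul: "\<And>a x. a \<in> S \<Longrightarrow> x \<in> L \<Longrightarrow> a * x \<in> L"
      using L unfolding left_ideal_in_def by auto
    obtain M1 where M1: "left_ideal_in scale ((\<lambda>s. c * s) ` S) M1"
      "((\<lambda>x. c * x) ` L) \<inter> M1 = {0}"
      "{x + y | x y. x \<in> (\<lambda>x. c * x) ` L \<and> y \<in> M1} = (\<lambda>s. c * s) ` S"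
      by (rule piece[OF SA c ss1 comm L])
    obtain M2 where M2: "left_ideal_in scale ((\<lambda>s. (u - c) * s) ` S) M2"
      "((\<lambda>x. (u - c) * x) ` L) \<inter> M2 = {0}"
      "{x + y | x y. x \<in> (\<lambda>x. (u - c) * x) ` L \<and> y \<in> M2} = (\<lambda>s. (u - c) * s) ` S"
      by (rule piece[OF SA ucS ss2 comm2 L])
    have M1s: "subspace M1" and M1A: "M1 \<subseteq> (\<lambda>s. c * s) ` S"
      and M1m: "\<And>a x. a \<in> (\<lambda>s. c * s) ` S \<Longrightarrow> x \<in> M1 \<Longrightarrow> a * x \<in> M1"
      using M1(1) unfolding left_ideal_in_def by auto
    have M2s: "subspace M2" and M2A: "M2 \<subseteq> (\<lambda>s. (u - c) * s) ` S"
      and M2m: "\<And>a x. a \<in> (\<lambda>s. (u - c) * s) ` S \<Longrightarrow> x \<in> M2 \<Longrightarrow> a * x \<in> M2"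
      using M2(1) unfolding left_ideal_in_def by auto
    have M1S: "M1 \<subseteq> S" using M1A mul c by auto
    have M2S: "M2 \<subseteq> S" using M2A mul ucS by auto
    define M where "M = {x + y | x y. x \<in> M1 \<and> y \<in> M2}"
    have MI: "left_ideal_in scale S M" unfolding left_ideal_in_def
    proof (intro conjI ballI)
      show "subspace M" unfolding subspace_def
      proof (intro conjI ballI allI)
        show "0 \<in> M" unfolding M_def using subspace_0[OF M1s] subspace_0[OF M2s] by force
      next
        fix x y assume "x \<in> M" "y \<in> M"
        then obtain a b a' b' where "a \<in> M1" "b \<in> M2" "a' \<in> M1" "b' \<in> M2" "x = a + b" "y = a' + b'"
          unfolding M_def by blast
        moreover have "x + y = (a + a') + (b + b')" using calculation by (simp add: algebra_simps)
        ultimately show "x + y \<in> M" unfolding M_def using subspace_add[OF M1s] subspace_add[OF M2s] by blast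
      next
        fix k x assume "x \<in> M"
        then obtain a b where "a \<in> M1" "b \<in> M2" "x = a + b" unfolding M_def by blast
        moreover have "scale k x = scale k a + scale k b" using calculation by (simp add: scale_right_distrib)
        ultimately show "scale k x \<in> M" unfolding M_def using subspace_scale[OF M1s] subspace_scale[OF M2s]
          by blast
      qed
      show "M \<subseteq> S" unfolding M_def using M1S M2S subspace_add[OF sub] by blast
    next
      fix s x assume s: "s \<in> S" and "x \<in> M"
      then obtain a b where ab: "a \<in> M1" "b \<in> M2" "x = a + b" unfolding M_def by blast
      have "s * a = (c * s) * a" using A1(1)[of a] ab M1A comm[OF s] by (metis mult.assoc subsetD)
      then have "s * a \<in> M1" using M1m ab s by auto
      moreover have "s * b = ((u - c) * s) * b" using A2(2)[of b] ab M2A comm2[OF s] by (metis mult.assoc subsetD)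
      then have "s * b \<in> M2" using M2m ab s by auto
      ultimately show "s * x \<in> M" unfolding M_def using ab by (auto simp: distrib_left)
    qed
    have int: "L \<inter> M = {0}"
    proof
      show "L \<inter> M \<subseteq> {0}"
      proof
        fix x assume x: "x \<in> L \<inter> M"
        then obtain a b where ab: "a \<in> M1" "b \<in> M2" "x = a + b" unfolding M_def by blast
        have aA: "a \<in> (\<lambda>s. c * s) ` S" and bB: "b \<in> (\<lambda>s. (u - c) * s) ` S" using ab M1A M2A by auto
        have "c * x = a" using ab A1(1)[OF aA] A2(1)[OF bB] by (simp add: distrib_left)
        moreover have "c * x \<in> (\<lambda>x. c * x) ` L" using x by auto
        ultimately have a0: "a = 0" using M1(2) ab by auto
        have "(u - c) * x = b" using ab A1(2)[OF aA] A2(2)[OF bB] by (simp add: distrib_left)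
        moreover have "(u - c) * x \<in> (\<lambda>x. (u - c) * x) ` L" using x by auto
        ultimately have b0: "b = 0" using M2(2) ab by auto
        show "x \<in> {0}" using a0 b0 ab by simp
      qed
      show "{0} \<subseteq> L \<inter> M" using subspace_0[OF Lsub] MI unfolding left_ideal_in_def
        using subspace_0 by blast
    qed
    have sumeq: "{x + y | x y. x \<in> L \<and> y \<in> M} = S"
    proof
      show "{x + y | x y. x \<in> L \<and> y \<in> M} \<subseteq> S"
        using LS MI subspace_add[OF sub] unfolding left_ideal_in_def by blast
    next
      show "S \<subseteq> {x + y | x y. x \<in> L \<and> y \<in> M}"
      proof
        fix x assume x: "x \<in> S"
        have "c * x \<in> (\<lambda>s. c * s) ` S" using x by auto
        then obtain l1 m1 where lm1: "l1 \<in> L" "m1 \<in> M1" "c * x = c * l1 + m1" using M1(3) by blast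
        have "(u - c) * x \<in> (\<lambda>s. (u - c) * s) ` S" using x by auto
        then obtain l2 m2 where lm2: "l2 \<in> L" "m2 \<in> M2" "(u - c) * x = (u - c) * l2 + m2" using M2(3) by blast
        have "x = c * x + (u - c) * x" using ux[OF x] by (simp add: left_diff_distrib)
        also have "\<dots> = (c * l1 + (u - c) * l2) + (m1 + m2)" using lm1 lm2 by (simp add: algebra_simps)
        finally have "x = (c * l1 + (u - c) * l2) + (m1 + m2)" .
        moreover have "c * l1 + (u - c) * l2 \<in> L" using Lmul c ucS lm1 lm2 subspace_add[OF Lsub] by auto
        moreover have "m1 + m2 \<in> M" unfolding M_def using lm1 lm2 by blast
        ultimately show "x \<in> {x + y | x y. x \<in> L \<and> y \<in> M}" by blast
      qed
    qed
    show ?thesis using MI int sumeq by blast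
  qed
  then show ?thesis unfolding semisimple_alg_def using u by blast
qed

lemma sq_zero_ideal:
  assumes SA: "subalgebra scale S" and ss: "semisimple_alg scale S"
    and y: "y \<in> S" and yy: "\<And>s. s \<in> S \<Longrightarrow> y * s * y = 0"
  shows "y = 0"
proof -
  have sub: "subspace S" and mul: "\<And>x y. x \<in> S \<Longrightarrow> y \<in> S \<Longrightarrow> x * y \<in> S"
    using subalgD[OF SA] by auto
  obtain u where u: "is_identity_of S u" and comp:
    "\<And>L. left_ideal_in scale S L \<Longrightarrow>
        (\<exists>L'. left_ideal_in scale S L' \<and> L \<inter> L' = {0} \<and> {x + y | x y. x \<in> L \<and> y \<in> L'} = S)"
    using ss unfolding semisimple_alg_def by blast
  have uS: "u \<in> S" and ux: "\<And>x. x \<in> S \<Longrightarrow> u * x = x \<and> x * u = x" using u unfolding is_identity_of_def by auto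
  define N where "N = (\<lambda>s. s * y) ` S"
  have NI: "left_ideal_in scale S N" unfolding left_ideal_in_def
  proof (intro conjI ballI)
    show "subspace N" unfolding subspace_def
    proof (intro conjI ballI allI)
      show "0 \<in> N" unfolding N_def using subspace_0[OF sub] by (auto intro!: image_eqI[of _ _ 0])
    next
      fix a b assume "a \<in> N" "b \<in> N"
      then obtain s t where "s \<in> S" "t \<in> S" "a = s * y" "b = t * y" unfolding N_def by auto
      moreover then have "a + b = (s + t) * y" by (simp add: distrib_right)
      ultimately show "a + b \<in> N" unfolding N_def using subspace_add[OF sub] by blast
    next
      fix c a assume "a \<in> N"
      then obtain s where "s \<in> S" "a = s * y" unfolding N_def by auto
      moreover then have "scale c a = scale c s * y" by (simp add: sm1)
      ultimately show "scale c a \<in> N" unfolding N_def using subspace_scale[OF sub] by blast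
    qed
    show "N \<subseteq> S" unfolding N_def using mul y by auto
  next
    fix a x assume "a \<in> S" "x \<in> N"
    then obtain s where "s \<in> S" "x = s * y" unfolding N_def by auto
    moreover then have "a * x = (a * s) * y" by (simp add: mult.assoc)
    ultimately show "a * x \<in> N" unfolding N_def using mul \<open>a \<in> S\<close> by blast
  qed
  obtain M where M: "left_ideal_in scale S M" "N \<inter> M = {0}" "{x + y | x y. x \<in> N \<and> y \<in> M} = S"
    using comp[OF NI] by blast
  have Mmul: "\<And>a x. a \<in> S \<Longrightarrow> x \<in> M \<Longrightarrow> a * x \<in> M" using M(1) unfolding left_ideal_in_def by auto
  obtain g g' where g: "g \<in> N" "g' \<in> M" "u = g + g'" using uS M(3) by blast
  have NN: "a * b = 0" if ab: "a \<in> N" "b \<in> N" for a b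
  proof -
    obtain s t where "s \<in> S" "t \<in> S" "a = s * y" "b = t * y" using ab unfolding N_def by auto
    then show ?thesis using yy[of t] by (simp add: mult.assoc)
  qed
  have yN: "y \<in> N" unfolding N_def using ux[OF y] uS by (auto intro!: image_eqI[of _ _ u])
  have "y = y * g + y * g'" using ux[OF y] g(3) by (simp add: distrib_left)
  then have "y = y * g'" using NN[OF yN g(1)] by simp
  then have "y \<in> M" using Mmul[OF y g(2)] by simp
  then show ?thesis using yN M(2) by auto
qed

lemma central_idem:
  assumes SA: "subalgebra scale S" and ss: "semisimple_alg scale S"
    and I: "left_ideal_in scale S I" and Ir: "\<And>x s. x \<in> I \<Longrightarrow> s \<in> S \<Longrightarrow> x * s \<in> I"
  obtains e where "e \<in> I" "e * e = e" "\<And>x. x \<in> I \<Longrightarrow> e * x = x \<and> x * e = x"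
    "\<And>s. s \<in> S \<Longrightarrow> e * s = s * e"
proof -
  have sub: "subspace S" and mul: "\<And>x y. x \<in> S \<Longrightarrow> y \<in> S \<Longrightarrow> x * y \<in> S"
    using subalgD[OF SA] by auto
  obtain u where u: "is_identity_of S u" and comp:
    "\<And>L. left_ideal_in scale S L \<Longrightarrow>
        (\<exists>L'. left_ideal_in scale S L' \<and> L \<inter> L' = {0} \<and> {x + y | x y. x \<in> L \<and> y \<in> L'} = S)"
    using ss unfolding semisimple_alg_def by blast
  have uS: "u \<in> S" and ux: "\<And>x. x \<in> S \<Longrightarrow> u * x = x \<and> x * u = x" using u unfolding is_identity_of_def by auto
  have Isub: "subspace I" and IS: "I \<subseteq> S" and Imul: "\<And>a x. a \<in> S \<Longrightarrow> x \<in> I \<Longrightarrow> a * x \<in> I"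
    using I unfolding left_ideal_in_def by auto
  obtain M where M: "left_ideal_in scale S M" "I \<inter> M = {0}" "{x + y | x y. x \<in> I \<and> y \<in> M} = S"
    using comp[OF I] by blast
  have Mmul: "\<And>a x. a \<in> S \<Longrightarrow> x \<in> M \<Longrightarrow> a * x \<in> M" and MS: "M \<subseteq> S"
    using M(1) unfolding left_ideal_in_def by auto
  obtain e e' where e: "e \<in> I" "e' \<in> M" "u = e + e'" using uS M(3) by blast
  have eS: "e \<in> S" and e'S: "e' \<in> S" using e IS MS by auto
  have xe: "x * e = x" if x: "x \<in> I" for x
  proof -
    have xS: "x \<in> S" using x IS by auto
    have eq: "x = x * e + x * e'" using ux[OF xS] e(3) by (simp add: distrib_left)
    have "x * e' \<in> I" using subspace_diff[OF Isub x Ir[OF x eS]] eq by (metis add_diff_cancel_left')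
    moreover have "x * e' \<in> M" using Mmul[OF xS e(2)] .
    ultimately have "x * e' = 0" using M(2) by auto
    then show ?thesis using eq by simp
  qed
  have ex: "e * x = x" if x: "x \<in> I" for x
  proof -
    have xS: "x \<in> S" using x IS by auto
    have "e' * x = 0"
    proof (rule sq_zero_ideal[OF SA ss])
      show "e' * x \<in> S" using mul e'S xS by auto
    next
      fix s assume s: "s \<in> S"
      have xs: "x * s \<in> I" using Ir[OF x s] .
      have "x * s * e' \<in> I" using Ir[OF xs e'S] .
      moreover have "x * s * e' \<in> M" using Mmul[OF _ e(2)] xs IS by auto
      ultimately have "x * s * e' = 0" using M(2) by auto
      then show "e' * x * s * (e' * x) = 0" by (metis mult.assoc mult_zero_left mult_zero_right)
    qed
    then show ?thesis using ux[OF xS] e(3) by (simp add: distrib_right)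
  qed
  have ee: "e * e = e" using xe[OF e(1)] .
  have cen: "e * s = s * e" if s: "s \<in> S" for s
  proof -
    have "e * (s * e) = s * e" using ex Imul[OF s e(1)] by blast
    moreover have "(e * s) * e = e * s" using xe Ir[OF e(1) s] by blast
    ultimately show ?thesis by (simp add: mult.assoc)
  qed
  show ?thesis using that e(1) ee xe ex cen by blast
qed

end

locale cor_setup = kalg scale for scale :: "'k::field \<Rightarrow> 'r::ring_1 \<Rightarrow> 'r" +
  fixes J T :: "'r set" and p :: 'r
  assumes J_ideal: "alg_ideal scale J"
    and J_loc: "loc_fdss scale J"
    and T_fdss: "fdss scale T"
    and p_id: "is_identity_of T p"
    and sumTJ: "{t + j | t j. t \<in> T \<and> j \<in> J} = UNIV"
    and direct: "T \<inter> J = {0}"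
begin

lemma Jsub: "subspace J" and Jl: "\<And>x r. x \<in> J \<Longrightarrow> r * x \<in> J" and Jr: "\<And>x r. x \<in> J \<Longrightarrow> x * r \<in> J"
  using J_ideal unfolding alg_ideal_def by auto

lemma TA: "subalgebra scale T" and Tsub: "subspace T" and Tmul: "\<And>x y. x \<in> T \<Longrightarrow> y \<in> T \<Longrightarrow> x * y \<in> T"
  and Tfd: "fin_dim scale T" and Tss: "semisimple_alg scale T"
  using T_fdss subalgD unfolding fdss_def by auto

lemma pT: "p \<in> T" and Tp: "\<And>t. t \<in> T \<Longrightarrow> p * t = t \<and> t * p = t"
  using p_id unfolding is_identity_of_def by auto

lemma pp: "p * p = p" using Tp[OF pT] by simp

lemma qJ: "1 - p \<in> J"
proof -
  obtain t0 j0 where tj: "t0 \<in> T" "j0 \<in> J" "1 = t0 + j0" using sumTJ by blast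
  have "p = t0 * p + j0 * p" using tj(3) by (metis distrib_right mult_1_left)
  then have "p - t0 = j0 * p" using Tp[OF tj(1)] by (simp add: algebra_simps)
  then have "p - t0 \<in> T \<inter> J" using subspace_diff[OF Tsub pT tj(1)] Jr[OF tj(2)] by auto
  then have "p = t0" using direct by auto
  then show ?thesis using tj by (metis add_diff_cancel_left')
qed

lemma T_corner: "T \<subseteq> corner p UNIV"
proof
  fix t assume "t \<in> T"
  then have "t = p * t * p" using Tp by simp
  then show "t \<in> corner p UNIV" unfolding corner_def by blast
qed

lemma corner_p: "x \<in> corner p A \<Longrightarrow> p * x = x \<and> x * p = x"
  unfolding corner_def using pp by (auto simp: mult.assoc[symmetric]) (simp add: mult.assoc)

lemma a_b:
  assumes a: "loc_fdss scale UNIV"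
  shows "loc_fdss scale (corner p UNIV)"
  unfolding loc_fdss_def
proof (intro allI impI)
  fix F assume F: "finite F \<and> F \<subseteq> corner p UNIV"
  obtain S where S: "insert p F \<subseteq> S" "fdss scale S"
    using a F unfolding loc_fdss_def by (meson finite_insert subset_UNIV)
  have SA: "subalgebra scale S" and Sfd: "fin_dim scale S" and Sss: "semisimple_alg scale S"
    using S(2) unfolding fdss_def by auto
  have pS: "p \<in> S" using S by auto
  have "F \<subseteq> corner p S"
  proof
    fix x assume x: "x \<in> F"
    then have "x = p * x * p" using F corner_p by (metis subsetD)
    then show "x \<in> corner p S" unfolding corner_def using x S by blast
  qed
  moreover have "corner p S \<subseteq> corner p UNIV" unfolding corner_def by auto
  moreover have "fdss scale (corner p S)" unfolding fdss_def
    using corner_subalg[OF SA pS pp] corner_fin_dim[OF Sfd] corner_ss[OF SA Sss pS pp] by blast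
  ultimately show "\<exists>S. F \<subseteq> S \<and> S \<subseteq> corner p UNIV \<and> fdss scale S" by blast
qed

lemma b_c:
  assumes b: "loc_fdss scale (corner p UNIV)"
    and f: "f \<in> corner p J" "f * f = f"
  shows "\<exists>e. e \<in> corner p J \<and> e * e = e \<and> f \<in> corner e J \<and> (\<forall>t\<in>T. e * t = t * e)"
proof -
  obtain BT where BT: "finite BT" "BT \<subseteq> T" "T \<subseteq> span BT" using fin_basis[OF Tsub Tfd] by blast
  have fC: "f \<in> corner p UNIV" using f unfolding corner_def by auto
  obtain S where S: "insert f BT \<subseteq> S" "S \<subseteq> corner p UNIV" "fdss scale S"
  proof -
    have "insert f BT \<subseteq> corner p UNIV" using BT T_corner fC by auto
    moreover have "finite (insert f BT)" using BT by simp
    ultimately show ?thesis using b that unfolding loc_fdss_def by blast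
  qed
  have SA: "subalgebra scale S" and Sss: "semisimple_alg scale S"
    using S(3) unfolding fdss_def by auto
  have sub: "subspace S" and mul: "\<And>x y. x \<in> S \<Longrightarrow> y \<in> S \<Longrightarrow> x * y \<in> S"
    using subalgD[OF SA] by auto
  have TS: "T \<subseteq> S" using BT(3) span_minimal[of BT S] S(1) sub by blast
  have fJ: "f \<in> J" using f unfolding corner_def using Jl Jr by auto
  have I: "left_ideal_in scale S (S \<inter> J)" unfolding left_ideal_in_def
    using subspace_inter[OF sub Jsub] mul Jl by auto
  have Ir: "\<And>x s. x \<in> S \<inter> J \<Longrightarrow> s \<in> S \<Longrightarrow> x * s \<in> S \<inter> J" using mul Jr by auto
  obtain e where e: "e \<in> S \<inter> J" "e * e = e" "\<And>x. x \<in> S \<inter> J \<Longrightarrow> e * x = x \<and> x * e = x"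
    "\<And>s. s \<in> S \<Longrightarrow> e * s = s * e"
    using central_idem[OF SA Sss I Ir] by blast
  have "e = p * e * p" using e(1) S(2) corner_p by auto
  then have "e \<in> corner p J" unfolding corner_def using e(1) by blast
  moreover have "f \<in> corner e J"
  proof -
    have "f \<in> S \<inter> J" using S fJ by auto
    then have "f = e * f * e" using e(3) by simp
    then show ?thesis unfolding corner_def using fJ by blast
  qed
  moreover have "\<forall>t\<in>T. e * t = t * e" using TS e(4) by auto
  ultimately show ?thesis using e(2) by blast
qed

lemma c_a:
  assumes c: "\<forall>f. f \<in> corner p J \<and> f * f = f \<longrightarrow>
              (\<exists>e. e \<in> corner p J \<and> e * e = e \<and> f \<in> corner e J \<and> (\<forall>t\<in>T. e * t = t * e))"
  shows "loc_fdss scale UNIV"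
  unfolding loc_fdss_def
proof (intro allI impI)
  fix F :: "'r set" assume F: "finite F \<and> F \<subseteq> UNIV"
  define q where "q = 1 - p"
  have qJ': "q \<in> J" using qJ q_def by simp
  have pq: "p * q = 0" "q * p = 0" unfolding q_def using pp by (simp_all add: algebra_simps)
  have qq: "q * q = q" unfolding q_def using pp by (simp add: algebra_simps)
  have qT: "q * t = 0" "t * q = 0" if t: "t \<in> T" for t
    unfolding q_def using Tp[OF t] by (simp_all add: algebra_simps)
  have "\<forall>x. \<exists>tj. fst tj + snd tj = x \<and> fst tj \<in> T \<and> snd tj \<in> J"
  proof
    fix x :: 'r
    have "x \<in> {t + j | t j. t \<in> T \<and> j \<in> J}" using sumTJ by simp
    then obtain t j where "x = t + j" "t \<in> T" "j \<in> J" by blast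
    then show "\<exists>tj. fst tj + snd tj = x \<and> fst tj \<in> T \<and> snd tj \<in> J" by (intro exI[of _ "(t, j)"]) simp
  qed
  then have "\<exists>tj. \<forall>x. fst (tj x) + snd (tj x) = x \<and> fst (tj x) \<in> T \<and> snd (tj x) \<in> J" by (rule choice)
  then obtain tj where tj: "\<And>x. fst (tj x) + snd (tj x) = x \<and> fst (tj x) \<in> T \<and> snd (tj x) \<in> J" by blast
  define G where "G = insert q ((\<lambda>x. snd (tj x)) ` F)"
  have tjJ: "\<And>x. snd (tj x) \<in> J" using tj by (rule conjunct2[OF conjunct2])
  have tjT: "\<And>x. fst (tj x) \<in> T" using tj by (rule conjunct1[OF conjunct2])
  have tjE: "\<And>x. fst (tj x) + snd (tj x) = x" using tj by (rule conjunct1)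
  have G1: "finite G" unfolding G_def using F by simp
  have G2: "G \<subseteq> J" unfolding G_def using tjJ qJ' by (simp add: image_subset_iff)
  have "finite G \<and> G \<subseteq> J \<longrightarrow> (\<exists>S. G \<subseteq> S \<and> S \<subseteq> J \<and> fdss scale S)"
    using J_loc unfolding loc_fdss_def by (rule spec)
  then obtain S0 where S0: "G \<subseteq> S0" "S0 \<subseteq> J" "fdss scale S0"
    using G1 G2 by blast
  have "semisimple_alg scale S0" using S0(3) unfolding fdss_def by blast
  then obtain f0 where f0: "is_identity_of S0 f0" unfolding semisimple_alg_def by blast
  have f0S: "f0 \<in> S0" and f0x: "\<And>x. x \<in> S0 \<Longrightarrow> f0 * x = x \<and> x * f0 = x" using f0 unfolding is_identity_of_def by auto
  have qS0: "q \<in> S0" using S0 G_def by auto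
  have f0q: "f0 * q = q" "q * f0 = q" using f0x[OF qS0] by auto
  have f0f0: "f0 * f0 = f0" using f0x[OF f0S] by auto
  have f0J: "f0 \<in> J" using f0S S0 by auto
  define f' where "f' = p * f0 * p"
  have f'eq: "f' = f0 - q"
  proof -
    have "f' = (1 - q) * f0 * (1 - q)" unfolding f'_def q_def by simp
    also have "\<dots> = f0 - q * f0 - f0 * q + q * f0 * q" by (simp add: algebra_simps)
    also have "\<dots> = f0 - q" using f0q qq by simp
    finally show ?thesis .
  qed
  have f'C: "f' \<in> corner p J" unfolding f'_def corner_def using f0J by blast
  have f'f': "f' * f' = f'"
  proof -
    have "f' * f' = f0 * f0 - f0 * q - q * f0 + q * q" unfolding f'eq by (simp add: algebra_simps)
    then show ?thesis using f0f0 f0q qq f'eq by simp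
  qed
  obtain e' where e': "e' \<in> corner p J" "e' * e' = e'" "f' \<in> corner e' J" "\<forall>t\<in>T. e' * t = t * e'"
    using c f'C f'f' by blast
  have e'p: "p * e' = e'" "e' * p = e'" using corner_p[OF e'(1)] by auto
  have e'q: "e' * q = 0" "q * e' = 0" using e'p unfolding q_def by (simp_all add: algebra_simps)
  have e'J: "e' \<in> J" using e'(1) unfolding corner_def using Jl Jr by auto
  have f'e': "e' * f' = f'" "f' * e' = f'"
  proof -
    obtain y where "f' = e' * y * e'" using e'(3) unfolding corner_def by auto
    then show "e' * f' = f'" "f' * e' = f'" using e'(2) by (simp_all add: mult.assoc[symmetric]) (simp add: mult.assoc)
  qed
  have f'q: "q * f' = 0" "f' * q = 0" unfolding f'_def using pq by (simp_all add: mult.assoc[symmetric]) (simp add: mult.assoc)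
  define e where "e = e' + q"
  have eJ: "e \<in> J" unfolding e_def using subspace_add[OF Jsub e'J qJ'] .
  have ee: "e * e = e" unfolding e_def using e'(2) e'q qq by (simp add: algebra_simps)
  have f0e: "e * f0 = f0" "f0 * e = f0"
  proof -
    have f0eq: "f0 = f' + q" using f'eq by simp
    show "e * f0 = f0" unfolding e_def f0eq using f'e' e'q f'q qq by (simp add: algebra_simps)
    show "f0 * e = f0" unfolding e_def f0eq using f'e' e'q f'q qq by (simp add: algebra_simps)
  qed
  have eT: "e * t = t * e" if t: "t \<in> T" for t
    unfolding e_def using e'(4) t qT[OF t] by (simp add: algebra_simps)
  obtain BT where BT: "finite BT" "BT \<subseteq> T" "T \<subseteq> span BT" using fin_basis[OF Tsub Tfd] by blast
  define X where "X = G \<union> {e} \<union> (\<lambda>t. t * e) ` BT"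
  have X: "finite X" "X \<subseteq> J" unfolding X_def using G1 G2 BT eJ Jl by auto
  have "finite X \<and> X \<subseteq> J \<longrightarrow> (\<exists>S. X \<subseteq> S \<and> S \<subseteq> J \<and> fdss scale S)"
    using J_loc unfolding loc_fdss_def by (rule spec)
  then obtain S1 where S1: "X \<subseteq> S1" "S1 \<subseteq> J" "fdss scale S1" using X by blast
  have S1A: "subalgebra scale S1" and S1fd: "fin_dim scale S1" and S1ss: "semisimple_alg scale S1"
    using S1(3) unfolding fdss_def by auto
  have S1sub: "subspace S1" using subalgD[OF S1A] by auto
  have eS1: "e \<in> S1" using S1 X_def by auto
  define A where "A = corner e S1"
  have AA: "subalgebra scale A" unfolding A_def using corner_subalg[OF S1A eS1 ee] .
  have Asub: "subspace A" and Amul: "\<And>x y. x \<in> A \<Longrightarrow> y \<in> A \<Longrightarrow> x * y \<in> A" using subalgD[OF AA] by auto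
  have Afd: "fin_dim scale A" unfolding A_def using corner_fin_dim[OF S1fd] .
  have Ass: "semisimple_alg scale A" unfolding A_def using corner_ss[OF S1A S1ss eS1 ee] .
  have Ae: "e * a = a" "a * e = a" if a: "a \<in> A" for a
  proof -
    obtain y where "a = e * y * e" using a unfolding A_def corner_def by auto
    then show "e * a = a" "a * e = a" using ee by (simp_all add: mult.assoc[symmetric]) (simp add: mult.assoc)
  qed
  have AJ: "A \<subseteq> J" unfolding A_def corner_def using S1 Jl Jr by auto
  have inA: "x \<in> S1 \<Longrightarrow> e * x * e = x \<Longrightarrow> x \<in> A" for x
    unfolding A_def corner_def by (metis image_eqI)
  have eA: "e \<in> A" using inA[OF eS1] ee by simp
  have GA: "G \<subseteq> A"
  proof
    fix g assume g: "g \<in> G"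
    then have gS0: "g \<in> S0" using S0 by auto
    have "g = f0 * g * f0" using f0x[OF gS0] by simp
    then have "e * g * e = g" using f0e by (metis mult.assoc)
    then show "g \<in> A" using inA g S1 X_def by auto
  qed
  have teS1: "t * e \<in> S1" if t: "t \<in> T" for t
  proof -
    have "t * e \<in> span ((\<lambda>t. t * e) ` BT)"
      using span_map_sub[of "\<lambda>t. t * e", OF _ _ subsetD[OF BT(3) t]] by (simp add: distrib_right sm1)
    moreover have "span ((\<lambda>t. t * e) ` BT) \<subseteq> S1" using span_minimal S1sub S1(1) X_def by auto
    ultimately show ?thesis by auto
  qed
  have teA: "t * e \<in> A" if t: "t \<in> T" for t
  proof -
    have "e * (t * e) * e = t * e" using eT[OF t] ee by (metis mult.assoc)
    then show ?thesis using inA teS1[OF t] by auto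
  qed
  have TAl: "t * a \<in> A" if "t \<in> T" "a \<in> A" for t a
  proof -
    have "t * a = (t * e) * a" using Ae that by (metis mult.assoc)
    then show ?thesis using Amul teA that by auto
  qed
  have TAr: "a * t \<in> A" if "t \<in> T" "a \<in> A" for t a
  proof -
    have "a * t = a * (t * e)" using Ae eT that by (metis mult.assoc)
    then show ?thesis using Amul teA that by auto
  qed
  define S where "S = {x + y | x y. x \<in> T \<and> y \<in> A}"
  have FS: "F \<subseteq> S"
  proof
    fix x assume x: "x \<in> F"
    have "snd (tj x) \<in> A" using GA x G_def by auto
    moreover have "x = fst (tj x) + snd (tj x)" "fst (tj x) \<in> T" using tjE[of x] tjT[of x] by auto
    ultimately show "x \<in> S" unfolding S_def by blast
  qed
  have Ssub: "subspace S" unfolding subspace_def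
  proof (intro conjI ballI allI)
    show "0 \<in> S" unfolding S_def using subspace_0[OF Tsub] subspace_0[OF Asub] by force
  next
    fix x y assume "x \<in> S" "y \<in> S"
    then obtain a b a' b' where "a \<in> T" "b \<in> A" "a' \<in> T" "b' \<in> A" "x = a + b" "y = a' + b'"
      unfolding S_def by blast
    moreover have "x + y = (a + a') + (b + b')" using calculation by (simp add: algebra_simps)
    ultimately show "x + y \<in> S" unfolding S_def using subspace_add[OF Tsub] subspace_add[OF Asub] by blast
  next
    fix k x assume "x \<in> S"
    then obtain a b where "a \<in> T" "b \<in> A" "x = a + b" unfolding S_def by blast
    moreover have "scale k x = scale k a + scale k b" using calculation by (simp add: scale_right_distrib)
    ultimately show "scale k x \<in> S" unfolding S_def using subspace_scale[OF Tsub] subspace_scale[OF Asub]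
      by blast
  qed
  have Smul: "x * y \<in> S" if xy: "x \<in> S" "y \<in> S" for x y
  proof -
    obtain a b a' b' where ab: "a \<in> T" "b \<in> A" "a' \<in> T" "b' \<in> A" "x = a + b" "y = a' + b'"
      using xy unfolding S_def by blast
    have "x * y = a * a' + ((a * b' + b * a') + b * b')" using ab by (simp add: algebra_simps)
    moreover have "a * a' \<in> T" using Tmul ab by auto
    moreover have "(a * b' + b * a') + b * b' \<in> A"
      using TAl TAr Amul ab subspace_add[OF Asub] by auto
    ultimately show ?thesis unfolding S_def by blast
  qed
  have SA: "subalgebra scale S" unfolding subalgebra_def using Ssub Smul by auto
  have Sfd: "fin_dim scale S" unfolding S_def using fin_dim_sum[OF Tfd Afd] .
  have oneS: "1 \<in> S"
  proof -
    have "q \<in> A" using GA G_def by auto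
    moreover have "1 = p + q" unfolding q_def by simp
    ultimately show ?thesis unfolding S_def using pT by blast
  qed
  have ident: "is_identity_of S 1" unfolding is_identity_of_def using oneS by auto
  have eS: "e \<in> S" unfolding S_def using eA subspace_0[OF Tsub] by force
  have ecomm: "e * s = s * e" if s: "s \<in> S" for s
  proof -
    obtain a b where "a \<in> T" "b \<in> A" "s = a + b" using s unfolding S_def by blast
    then show ?thesis using eT Ae by (simp add: algebra_simps)
  qed
  have eSA: "(\<lambda>s. e * s) ` S = A"
  proof
    show "(\<lambda>s. e * s) ` S \<subseteq> A"
    proof
      fix z assume "z \<in> (\<lambda>s. e * s) ` S"
      then obtain a b where ab: "a \<in> T" "b \<in> A" "z = e * (a + b)" unfolding S_def by blast
      then have "z = a * e + b" using eT Ae by (simp add: distrib_left)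
      then show "z \<in> A" using teA ab subspace_add[OF Asub] by auto
    qed
  next
    show "A \<subseteq> (\<lambda>s. e * s) ` S"
    proof
      fix b assume b: "b \<in> A"
      have "b = e * (0 + b)" using Ae[OF b] by simp
      moreover have "0 + b \<in> S" unfolding S_def using b subspace_0[OF Tsub] by blast
      ultimately show "b \<in> (\<lambda>s. e * s) ` S" by blast
    qed
  qed
  have ueS: "(\<lambda>s. (1 - e) * s) ` S = (\<lambda>t. (1 - e) * t) ` T"
  proof
    show "(\<lambda>s. (1 - e) * s) ` S \<subseteq> (\<lambda>t. (1 - e) * t) ` T"
    proof
      fix z assume "z \<in> (\<lambda>s. (1 - e) * s) ` S"
      then obtain a b where ab: "a \<in> T" "b \<in> A" "z = (1 - e) * (a + b)" unfolding S_def by blast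
      then have "z = (1 - e) * a" using Ae by (simp add: algebra_simps)
      then show "z \<in> (\<lambda>t. (1 - e) * t) ` T" using ab by blast
    qed
  next
    show "(\<lambda>t. (1 - e) * t) ` T \<subseteq> (\<lambda>s. (1 - e) * s) ` S"
    proof
      fix z assume "z \<in> (\<lambda>t. (1 - e) * t) ` T"
      then obtain a where a: "a \<in> T" "z = (1 - e) * a" by blast
      have "a + 0 \<in> S" unfolding S_def using a subspace_0[OF Asub] by blast
      then show "z \<in> (\<lambda>s. (1 - e) * s) ` S" using a by force
    qed
  qed
  have ss2: "semisimple_alg scale ((\<lambda>t. (1 - e) * t) ` T)"
  proof (rule image_ss[OF TA Tss])
    show "\<And>x y. (1 - e) * (x + y) = (1 - e) * x + (1 - e) * y" by (simp add: distrib_left)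
    show "\<And>c x. (1 - e) * scale c x = scale c ((1 - e) * x)" by (simp add: sm2)
    show "(1 - e) * (x * y) = (1 - e) * x * ((1 - e) * y)" if "x \<in> T" "y \<in> T" for x y
    proof -
      have "x * (1 - e) = (1 - e) * x" using eT[OF that(1)] by (simp add: algebra_simps)
      moreover have "(1 - e) * (1 - e) = 1 - e" using ee by (simp add: algebra_simps)
      ultimately have "(1 - e) * x * ((1 - e) * y) = (1 - e) * (1 - e) * x * y"
        by (metis mult.assoc)
      then show ?thesis using \<open>(1 - e) * (1 - e) = 1 - e\<close> by (simp add: mult.assoc)
    qed
  qed
  have Sss: "semisimple_alg scale S"
    by (rule split_ss[OF SA ident eS ee ecomm]) (simp_all only: eSA ueS Ass ss2)
  have "fdss scale S" unfolding fdss_def using SA Sfd Sss by auto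
  then show "\<exists>S. F \<subseteq> S \<and> S \<subseteq> UNIV \<and> fdss scale S" using FS by blast
qed

end

theorem corollary4p3:
  fixes scale :: "'k::field \<Rightarrow> 'r::ring_1 \<Rightarrow> 'r"
    and J T :: "'r set" and p :: 'r
  assumes alg: "K_algebra scale"
    and J_ideal: "alg_ideal scale J"
    and J_loc: "loc_fdss scale J"
    and T_fdss: "fdss scale T"
    and p_id: "is_identity_of T p"
    and sum: "{t + j | t j. t \<in> T \<and> j \<in> J} = UNIV"
    and direct: "T \<inter> J = {0}"
  shows "(loc_fdss scale UNIV \<longleftrightarrow> loc_fdss scale (corner p UNIV)) \<and>
         (loc_fdss scale (corner p UNIV) \<longleftrightarrow>
           (\<forall>f. f \<in> corner p J \<and> f * f = f \<longrightarrow>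
              (\<exists>e. e \<in> corner p J \<and> e * e = e \<and> f \<in> corner e J \<and> (\<forall>t\<in>T. e * t = t * e))))"
proof -
  have va: "vector_space scale" and m1: "\<And>c x y. scale c (x * y) = scale c x * y"
    and m2: "\<And>c x y. scale c (x * y) = x * scale c y"
    using alg unfolding K_algebra_def by auto
  interpret kalg scale
    by (rule kalg.intro[OF va]) (unfold_locales, simp_all only: m1[symmetric] m2[symmetric])
  interpret cs: cor_setup scale J T p
    by (unfold_locales) (fact J_ideal J_loc T_fdss p_id sum direct)+
  have bc: "loc_fdss scale (corner p UNIV) \<Longrightarrow>
           (\<forall>f. f \<in> corner p J \<and> f * f = f \<longrightarrow>
              (\<exists>e. e \<in> corner p J \<and> e * e = e \<and> f \<in> corner e J \<and> (\<forall>t\<in>T. e * t = t * e)))"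
    using cs.b_c by blast
  show ?thesis using cs.a_b cs.c_a bc by blast
qed

end
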